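(* Let $G$ be a solenoidal Hausdorff topological group. Then every continuous action of $G$ on the Hilbert cube $I^{\aleph_0}=[0,1]^{\mathbb N}$ has a fixed point. In particular every continuous action of $\mathbb R$ on $I^{\aleph_0}$ has a fixed point.
   Context: A topological group $G$ is solenoidal if there exists a continuous homomorphism $f\colon\mathbb R\to G$ whose image is dense in $G$. *)

theory Defs
  imports "HOL-Analysis.Analysis"
begin

text \<open>A topological group, written additively (group_add does NOT require commutativity):
  the group operation and inversion are continuous (product topology on 'g \<times> 'g).\<close>
definition topological_group_add :: "'g::{topological_space,group_add} itself \<Rightarrow> bool" where
  "topological_group_add (TYPE('g)) \<longleftrightarrow>
     continuous_on UNIV (\<lambda>p::'g \<times> 'g. fst p + snd p) \<and>
     continuous_on UNIV (\<lambda>x::'g. - x)"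

definition solenoidal :: "'g::{topological_space,group_add} itself \<Rightarrow> bool" where
  "solenoidal (TYPE('g)) \<longleftrightarrow>
     (\<exists>f :: real \<Rightarrow> 'g. continuous_on UNIV f \<and> (\<forall>s t. f (s + t) = f s + f t)
        \<and> closure (range f) = UNIV)"

text \<open>The Hilbert cube [0,1]^N, as a subset of nat \<Rightarrow> real with the product topology.\<close>
definition hilbert_cube :: "(nat \<Rightarrow> real) set" where
  "hilbert_cube = {x. \<forall>n. x n \<in> {0..1}}"

definition continuous_action_hc ::
  "('g::{topological_space,group_add} \<Rightarrow> (nat \<Rightarrow> real) \<Rightarrow> (nat \<Rightarrow> real)) \<Rightarrow> bool" where
  "continuous_action_hc a \<longleftrightarrow>
     (\<forall>g x. x \<in> hilbert_cube \<longrightarrow> a g x \<in> hilbert_cube) \<and>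
     (\<forall>x \<in> hilbert_cube. a 0 x = x) \<and>
     (\<forall>g h. \<forall>x \<in> hilbert_cube. a (g + h) x = a g (a h x)) \<and>
     continuous_on (UNIV \<times> hilbert_cube) (\<lambda>p. a (fst p) (snd p))"

end

theory Submission
  imports Defs
begin

lemma hc_PiE: "hilbert_cube = PiE UNIV (\<lambda>_. {0..1})"
  unfolding hilbert_cube_def by (auto simp: PiE_def)

lemma hc_compact: "compact hilbert_cube"
proof -
  have "compactin (product_topology (\<lambda>i. euclidean) UNIV) (PiE UNIV (\<lambda>_::nat. {0..1::real}))"
    by (simp add: compactin_PiE)
  then show ?thesis unfolding hc_PiE euclidean_product_topology by simp
qed

lemma hc_closed: "closed hilbert_cube"
  using hc_compact compact_imp_closed by blast

lemma dist_fun_bound: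
  fixes x y :: "nat \<Rightarrow> real"
  assumes "\<And>i. \<bar>x i - y i\<bar> \<le> c"
  shows "dist x y \<le> 2 * c"
proof -
  have c: "c \<ge> 0" using assms[of 0] by simp
  have s1: "summable (\<lambda>n. (1/2::real)^n * min (dist (x (from_nat n)) (y (from_nat n))) 1)"
    by (rule summable_comparison_test'[of "\<lambda>n. (1/2)^n"], auto simp add: summable_geometric_iff)
  have s2: "summable (\<lambda>n. (1/2::real)^n * c)"
    by (intro summable_mult2) (simp add: summable_geometric_iff)
  have "dist x y = (\<Sum>n. (1/2)^n * min (dist (x (from_nat n)) (y (from_nat n))) 1)"
    unfolding dist_fun_def by simp
  also have "\<dots> \<le> (\<Sum>n. (1/2::real)^n * c)"
  proof (rule suminf_le[OF _ s1 s2])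
    fix n
    have "min (dist (x (from_nat n)) (y (from_nat n))) 1 \<le> c"
      using assms[of "from_nat n"] by (simp add: dist_real_def)
    then show "(1/2::real)^n * min (dist (x (from_nat n)) (y (from_nat n))) 1 \<le> (1/2)^n * c"
      by (intro mult_left_mono) auto
  qed
  also have "\<dots> = 2 * c"
    using suminf_geometric[of "1/2::real"] suminf_mult2[of "\<lambda>n. (1/2::real)^n" c]
    by (simp add: summable_geometric_iff)
  finally show ?thesis .
qed

lemma hc_ne: "(\<lambda>_. 0) \<in> hilbert_cube"
  by (simp add: hilbert_cube_def)

lemma approx_fix:
  fixes \<phi> :: "(nat\<Rightarrow>real) \<Rightarrow> (nat\<Rightarrow>real)"
  assumes cont: "continuous_on hilbert_cube \<phi>" and into: "\<And>x. x \<in> hilbert_cube \<Longrightarrow> \<phi> x \<in> hilbert_cube"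
  shows "\<exists>x\<in>hilbert_cube. \<forall>i<N. \<phi> x i = x i"
proof (rule ccontr)
  let ?H = hilbert_cube
  assume nf: "\<not> ?thesis"
  then have N: "N > 0" using hc_ne by (cases N) auto
  define g where "g x = (\<Sum>i<N. \<bar>\<phi> x i - x i\<bar>)" for x
  have contc: "continuous_on ?H (\<lambda>x. \<phi> x i)" for i
    by (rule continuous_on_product_then_coordinatewise[OF cont])
  have contg: "continuous_on ?H g"
    unfolding g_def
    by (intro continuous_intros contc continuous_on_subset[OF continuous_on_product_coordinates]) auto
  obtain x0 where x0: "x0 \<in> ?H" "\<And>y. y \<in> ?H \<Longrightarrow> g x0 \<le> g y"
    using continuous_attains_inf[OF hc_compact _ contg] hc_ne by blast
  define d where "d = g x0"
  have "d > 0"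
  proof (rule ccontr)
    assume "\<not> d > 0"
    then have "g x0 = 0" unfolding d_def g_def by (smt (verit) sum_nonneg abs_ge_zero)
    then have "\<forall>i\<in>{..<N}. \<bar>\<phi> x0 i - x0 i\<bar> = 0"
      unfolding g_def by (subst sum_nonneg_eq_0_iff[symmetric]) auto
    then show False using nf x0(1) by auto
  qed
  have "\<forall>i. \<exists>e>0. \<forall>x\<in>?H. \<forall>y\<in>?H. dist y x < e \<longrightarrow> \<bar>\<phi> y i - \<phi> x i\<bar> < d / (2 * N)"
  proof
    fix i
    have "uniformly_continuous_on ?H (\<lambda>x. \<phi> x i)"
      by (rule compact_uniformly_continuous[OF contc hc_compact])
    moreover have "d / (2 * N) > 0" using \<open>d > 0\<close> N by auto
    ultimately show "\<exists>e>0. \<forall>x\<in>?H. \<forall>y\<in>?H. dist y x < e \<longrightarrow> \<bar>\<phi> y i - \<phi> x i\<bar> < d / (2 * N)"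
      unfolding uniformly_continuous_on_def dist_real_def by blast
  qed
  then obtain E where E: "\<And>i. E i > 0"
    "\<And>i x y. x \<in> ?H \<Longrightarrow> y \<in> ?H \<Longrightarrow> dist y x < E i \<Longrightarrow> \<bar>\<phi> y i - \<phi> x i\<bar> < d / (2 * N)"
    by metis
  define e where "e = Min (E ` {..<N})"
  have e: "e > 0" "\<And>i. i < N \<Longrightarrow> e \<le> E i"
    unfolding e_def using E(1) N by (auto simp: Min_gr_iff lessThan_empty_iff)
  obtain p :: nat where p: "2 / e + 2 * N / d + 1 \<le> real p"
    using real_arch_simple by blast
  have p0: "p > 0" using p e \<open>d > 0\<close>
    by (smt (verit, ccfv_threshold) divide_nonneg_nonneg of_nat_0 of_nat_0_le_iff gr0I)
  have p1: "2 / real p < e"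
  proof -
    have "2 / e < real p" using p e \<open>d > 0\<close> by (smt (verit) divide_nonneg_nonneg of_nat_0_le_iff)
    then show ?thesis using e p0 by (simp add: field_simps)
  qed
  have p2: "1 / real p < d / (2 * N)"
  proof -
    have "2 * N / d < real p" using p e \<open>d > 0\<close> by (smt (verit) divide_nonneg_nonneg of_nat_0_le_iff)
    then show ?thesis using \<open>d > 0\<close> p0 N by (simp add: field_simps)
  qed
  define v where "v x = (\<lambda>j. if j < N then real (x j) / real p else 0)" for x :: "nat \<Rightarrow> nat"
  define lab where "lab y i = (if y i = 1 then 1 else if y i \<le> \<phi> y i then 0 else (1::nat))" for y i
  have vH: "v x \<in> ?H" if "\<forall>i<N. x i \<le> p" for x
    using that p0 unfolding v_def hilbert_cube_def by auto
  obtain q where q: "\<forall>i<N. q i < p"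
    "\<forall>i<N. \<exists>r s. (\<forall>j<N. q j \<le> r j \<and> r j \<le> q j + 1) \<and> (\<forall>j<N. q j \<le> s j \<and> s j \<le> q j + 1) \<and> (lab (v r)) i \<noteq> (lab (v s)) i"
  proof (rule kuhn_lemma[of p N "\<lambda>x. lab (v x)"])
    show "0 < p" by fact
    show "\<forall>x. (\<forall>i<N. x i \<le> p) \<longrightarrow> (\<forall>i<N. lab (v x) i = 0 \<or> lab (v x) i = 1)"
      unfolding lab_def by auto
    show "\<forall>x. (\<forall>i<N. x i \<le> p) \<longrightarrow> (\<forall>i<N. x i = 0 \<longrightarrow> lab (v x) i = 0)"
    proof (intro allI impI)
      fix x i assume a: "\<forall>i<N. x i \<le> p" "i < N" "x i = 0"
      have "\<phi> (v x) \<in> ?H" using into vH a(1) by blast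
      then have "0 \<le> \<phi> (v x) i" unfolding hilbert_cube_def by auto
      then show "lab (v x) i = 0" using a unfolding lab_def v_def by auto
    qed
    show "\<forall>x. (\<forall>i<N. x i \<le> p) \<longrightarrow> (\<forall>i<N. x i = p \<longrightarrow> lab (v x) i = 1)"
      using p0 unfolding lab_def v_def by auto
  qed auto
  define z where "z = v q"
  have zH: "z \<in> ?H" unfolding z_def using q(1) vH by (simp add: less_imp_le)
  have key: "\<bar>\<phi> z i - z i\<bar> < d / N"
    if i: "i < N" and u: "u \<in> ?H" "w \<in> ?H" "\<And>j. \<bar>u j - z j\<bar> \<le> 1 / p" "\<And>j. \<bar>w j - z j\<bar> \<le> 1 / p"
      and l: "lab u i = 0" "lab w i = 1" for i u w
  proof -
    have lu: "u i \<le> \<phi> u i" using l unfolding lab_def by (auto split: if_splits)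
    have "\<phi> w \<in> ?H" using into u by blast
    then have lw: "\<phi> w i \<le> w i" using l unfolding lab_def hilbert_cube_def by (auto split: if_splits)
    have "dist u z \<le> 2 * (1 / p)" by (rule dist_fun_bound) (use u in auto)
    then have "dist u z < E i" using p1 e(2)[OF i] by simp
    then have cu: "\<bar>\<phi> u i - \<phi> z i\<bar> < d / (2 * N)" using E(2)[OF zH u(1)] by blast
    have "dist w z \<le> 2 * (1 / p)" by (rule dist_fun_bound) (use u in auto)
    then have "dist w z < E i" using p1 e(2)[OF i] by simp
    then have cw: "\<bar>\<phi> w i - \<phi> z i\<bar> < d / (2 * N)" using E(2)[OF zH u(2)] by blast
    have "d / N = d / (2 * N) + d / (2 * N)" by (simp add: field_simps)
    then show ?thesis using lu lw cu cw u(3)[of i] u(4)[of i] p2 by linarith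
  qed
  have "\<bar>\<phi> z i - z i\<bar> < d / N" if i: "i < N" for i
  proof -
    obtain r s where rs: "\<forall>j<N. q j \<le> r j \<and> r j \<le> q j + 1" "\<forall>j<N. q j \<le> s j \<and> s j \<le> q j + 1"
      "lab (v r) i \<noteq> lab (v s) i" using q(2) i by blast
    have near: "\<bar>v x j - z j\<bar> \<le> 1 / p" if "\<forall>j<N. q j \<le> x j \<and> x j \<le> q j + 1" for x j
    proof (cases "j < N")
      case True
      then have "q j \<le> x j" "x j \<le> q j + 1" using that by auto
      then have "real (q j) \<le> real (x j)" "real (x j) \<le> real (q j) + 1" by linarith+
      then have a: "\<bar>real (x j) - real (q j)\<bar> \<le> 1" by linarith
      have "\<bar>real (x j) / p - real (q j) / p\<bar> = \<bar>real (x j) - real (q j)\<bar> / p"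
        by (simp add: diff_divide_distrib[symmetric])
      also have "\<dots> \<le> 1 / p" using a by (intro divide_right_mono) auto
      finally show ?thesis using True unfolding v_def z_def by simp
    qed (auto simp: v_def z_def)
    have inH: "v x \<in> ?H" if "\<forall>j<N. q j \<le> x j \<and> x j \<le> q j + 1" for x
      using that q(1) by (intro vH) (metis Suc_eq_plus1 Suc_leI le_trans)
    have l01: "lab y i \<le> 1" for y unfolding lab_def by auto
    show ?thesis
    proof (cases "lab (v r) i = 0")
      case True
      then have "lab (v s) i = 1" using rs(3) l01[of "v s"] by linarith
      then show ?thesis using key[OF i inH[OF rs(1)] inH[OF rs(2)] near[OF rs(1)] near[OF rs(2)] True] by blast
    next
      case False
      then have a: "lab (v r) i = 1" using l01[of "v r"] by linarith
      then have "lab (v s) i = 0" using rs(3) l01[of "v s"] by linarith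
      then show ?thesis using key[OF i inH[OF rs(2)] inH[OF rs(1)] near[OF rs(2)] near[OF rs(1)] _ a] by blast
    qed
  qed
  then have "g z < (\<Sum>i<N. d / N)" unfolding g_def
    using N by (intro sum_strict_mono) auto
  also have "\<dots> = d" using N by simp
  finally show False using x0(2)[OF zH] d_def by simp
qed

lemma closed_fix:
  fixes \<phi> :: "(nat\<Rightarrow>real) \<Rightarrow> (nat\<Rightarrow>real)"
  assumes cont: "continuous_on hilbert_cube \<phi>"
  shows "closed {x\<in>hilbert_cube. \<phi> x = x}"
proof -
  have c0: "continuous_on hilbert_cube (\<lambda>x. \<phi> x i - x i)" for i
    by (intro continuous_on_diff continuous_on_product_then_coordinatewise[OF cont]
        continuous_on_subset[OF continuous_on_product_coordinates]) auto
  have c: "closed {x\<in>hilbert_cube. \<phi> x i - x i = 0}" for i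
    by (rule continuous_closed_preimage_constant[OF c0 hc_closed])
  have e: "{x\<in>hilbert_cube. \<phi> x = x} = hilbert_cube \<inter> (\<Inter>i. {x\<in>hilbert_cube. \<phi> x i - x i = 0})"
    by (auto simp: fun_eq_iff)
  have "closed (hilbert_cube \<inter> (\<Inter>i. {x\<in>hilbert_cube. \<phi> x i - x i = 0}))"
    by (rule closed_Int[OF hc_closed closed_INT]) (use c in blast)
  then show ?thesis using e by simp
qed

lemma hc_fpp:
  fixes \<phi> :: "(nat\<Rightarrow>real) \<Rightarrow> (nat\<Rightarrow>real)"
  assumes cont: "continuous_on hilbert_cube \<phi>" and into: "\<And>x. x \<in> hilbert_cube \<Longrightarrow> \<phi> x \<in> hilbert_cube"
  shows "\<exists>x\<in>hilbert_cube. \<phi> x = x"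
proof -
  define C where "C i = {x\<in>hilbert_cube. \<phi> x i - x i = 0}" for i
  have "hilbert_cube \<inter> (\<Inter>i\<in>UNIV. C i) \<noteq> {}"
  proof (rule compact_imp_fip_image[OF hc_compact])
    fix i :: nat
    have c0: "continuous_on hilbert_cube (\<lambda>x. \<phi> x i - x i)"
      by (intro continuous_on_diff continuous_on_product_then_coordinatewise[OF cont]
          continuous_on_subset[OF continuous_on_product_coordinates]) auto
    show "closed (C i)" unfolding C_def
      by (rule continuous_closed_preimage_constant[OF c0 hc_closed])
  next
    fix I' :: "nat set" assume "finite I'"
    then obtain N where N: "\<And>i. i \<in> I' \<Longrightarrow> i < N"
      by (meson finite_nat_bounded lessThan_iff subset_eq)
    obtain x where x: "x \<in> hilbert_cube" "\<forall>i<N. \<phi> x i = x i"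
      using approx_fix[OF cont into] by blast
    have "x \<in> C i" if "i \<in> I'" for i
      using x N[OF that] unfolding C_def by simp
    then have "x \<in> hilbert_cube \<inter> (\<Inter>i\<in>I'. C i)" using x(1) by blast
    then show "hilbert_cube \<inter> (\<Inter>i\<in>I'. C i) \<noteq> {}" by blast
  qed
  then obtain x where x: "x \<in> hilbert_cube" "\<And>i. x \<in> C i" by blast
  have "\<phi> x = x"
  proof
    fix i show "\<phi> x i = x i" using x(2)[of i] unfolding C_def by simp
  qed
  then show ?thesis using x(1) by blast
qed

lemma flow_fix:
  fixes b :: "real \<Rightarrow> (nat\<Rightarrow>real) \<Rightarrow> (nat\<Rightarrow>real)"
  assumes into: "\<And>t x. x \<in> hilbert_cube \<Longrightarrow> b t x \<in> hilbert_cube"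
    and zero: "\<And>x. x \<in> hilbert_cube \<Longrightarrow> b 0 x = x"
    and add: "\<And>s t x. x \<in> hilbert_cube \<Longrightarrow> b (s + t) x = b s (b t x)"
    and c1: "\<And>t. continuous_on hilbert_cube (b t)"
    and c2: "\<And>x. x \<in> hilbert_cube \<Longrightarrow> continuous_on UNIV (\<lambda>t. b t x)"
  shows "\<exists>x\<in>hilbert_cube. \<forall>t. b t x = x"
proof -
  define D where "D n = {x\<in>hilbert_cube. b (1 / 2^n) x = x}" for n :: nat
  have Dsub: "D (Suc n) \<subseteq> D n" for n
  proof
    fix x assume "x \<in> D (Suc n)"
    then have x: "x \<in> hilbert_cube" "b (1 / 2^Suc n) x = x" unfolding D_def by auto
    have "(1::real) / 2^n = 1 / 2^Suc n + 1 / 2^Suc n" by simp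
    then have "b (1 / 2^n) x = b (1 / 2^Suc n) (b (1 / 2^Suc n) x)" using add[OF x(1)] by metis
    then show "x \<in> D n" using x unfolding D_def by simp
  qed
  have Dmono: "m \<le> n \<Longrightarrow> D n \<subseteq> D m" for m n
    by (induction n rule: dec_induct) (use Dsub in blast)+
  have "hilbert_cube \<inter> (\<Inter>n\<in>UNIV. D n) \<noteq> {}"
  proof (rule compact_imp_fip_image[OF hc_compact])
    fix n :: nat
    show "closed (D n)" unfolding D_def by (rule closed_fix[OF c1])
  next
    fix I' :: "nat set" assume "finite I'"
    then obtain N where N: "\<And>i. i \<in> I' \<Longrightarrow> i < N"
      by (meson finite_nat_bounded lessThan_iff subset_eq)
    obtain x where x: "x \<in> hilbert_cube" "b (1 / 2^N) x = x"
      using hc_fpp[OF c1 into] by blast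
    then have xN: "x \<in> D N" unfolding D_def by simp
    have "x \<in> D i" if "i \<in> I'" for i
      using Dmono[of i N] N[OF that] xN by auto
    then have "x \<in> hilbert_cube \<inter> (\<Inter>i\<in>I'. D i)" using x(1) by blast
    then show "hilbert_cube \<inter> (\<Inter>i\<in>I'. D i) \<noteq> {}" by blast
  qed
  then obtain x where xH: "x \<in> hilbert_cube" and xD: "\<And>n. b (1 / 2^n) x = x"
    unfolding D_def by blast
  have nat: "b (real k / 2^n) x = x" for k n
  proof (induction k)
    case 0 then show ?case using zero[OF xH] by simp
  next
    case (Suc k)
    have "real (Suc k) / 2^n = real k / 2^n + 1 / 2^n" by (simp add: add_divide_distrib)
    then have "b (real (Suc k) / 2^n) x = b (real k / 2^n) (b (1 / 2^n) x)" using add[OF xH] by metis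
    then show ?case using xD Suc by simp
  qed
  have int: "b (of_int m / 2^n) x = x" for m n
  proof (cases "m \<ge> 0")
    case True
    then obtain k where "m = int k" by (metis nonneg_eq_int)
    then show ?thesis using nat by simp
  next
    case False
    then obtain k where k: "m = - int k" by (metis nonpos_int_cases linorder_le_cases)
    have "b (of_int m / 2^n) x = b (of_int m / 2^n) (b (real k / 2^n) x)" using nat by simp
    also have "\<dots> = b (of_int m / 2^n + real k / 2^n) x" using add[OF xH] by simp
    also have "\<dots> = x" using k zero[OF xH] by simp
    finally show ?thesis .
  qed
  have closedS: "closed {t \<in> UNIV. b t x = x}"
    by (rule continuous_closed_preimage_constant[OF c2[OF xH]]) simp
  have "b t x = x" for t
  proof -
    define s where "s n = of_int \<lfloor>t * 2^n\<rfloor> / (2::real)^n" for n :: nat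
    have lo: "t - 1 / 2^n \<le> s n" for n
    proof -
      have "t * 2^n - 1 \<le> of_int \<lfloor>t * 2^n\<rfloor>" by linarith
      then have "(t * 2^n - 1) / 2^n \<le> of_int \<lfloor>t * 2^n\<rfloor> / (2::real)^n"
        by (intro divide_right_mono) auto
      then show ?thesis unfolding s_def by (simp add: diff_divide_distrib)
    qed
    have hi: "s n \<le> t" for n
    proof -
      have "of_int \<lfloor>t * 2^n\<rfloor> \<le> t * 2^n" by linarith
      then have "of_int \<lfloor>t * 2^n\<rfloor> / (2::real)^n \<le> t * 2^n / 2^n"
        by (intro divide_right_mono) auto
      then show ?thesis unfolding s_def by simp
    qed
    have "(\<lambda>n. t - 1 / 2^n) \<longlonglongrightarrow> t - 0"
      by (intro tendsto_intros) (simp add: LIMSEQ_divide_realpow_zero)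
    then have f: "(\<lambda>n. t - 1 / 2^n) \<longlonglongrightarrow> t" by simp
    have "s \<longlonglongrightarrow> t"
      by (rule tendsto_sandwich[OF always_eventually always_eventually f tendsto_const])
        (use lo hi in blast)+
    moreover have "\<forall>n. s n \<in> {t \<in> UNIV. b t x = x}" using int unfolding s_def by simp
    ultimately have "t \<in> {t \<in> UNIV. b t x = x}" using closedS closed_sequentially by blast
    then show ?thesis by simp
  qed
  then show ?thesis using xH by blast
qed


theorem theorem2p3p12:
  fixes a :: "'g::{t2_space,group_add} \<Rightarrow> (nat \<Rightarrow> real) \<Rightarrow> (nat \<Rightarrow> real)"
    and b :: "real \<Rightarrow> (nat \<Rightarrow> real) \<Rightarrow> (nat \<Rightarrow> real)"
  shows "(topological_group_add TYPE('g) \<and> solenoidal TYPE('g) \<and> continuous_action_hc a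
            \<longrightarrow> (\<exists>x \<in> hilbert_cube. \<forall>g. a g x = x))
         \<and> (continuous_action_hc b \<longrightarrow> (\<exists>x \<in> hilbert_cube. \<forall>t. b t x = x))"
proof (intro conjI impI)
  have flow: "\<exists>x \<in> hilbert_cube. \<forall>t. c t x = x" if "continuous_action_hc c"
    for c :: "real \<Rightarrow> (nat \<Rightarrow> real) \<Rightarrow> (nat \<Rightarrow> real)"
  proof -
    note A = that[unfolded continuous_action_hc_def]
    have cc: "continuous_on (UNIV \<times> hilbert_cube) (\<lambda>p. c (fst p) (snd p))" using A by blast
    show ?thesis
    proof (rule flow_fix)
      show "\<And>t x. x \<in> hilbert_cube \<Longrightarrow> c t x \<in> hilbert_cube" using A by blast
      show "\<And>x. x \<in> hilbert_cube \<Longrightarrow> c 0 x = x" using A by blast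
      show "\<And>s t x. x \<in> hilbert_cube \<Longrightarrow> c (s + t) x = c s (c t x)" using A by blast
      show "continuous_on hilbert_cube (c t)" for t
      proof -
        have "continuous_on hilbert_cube (\<lambda>x. (\<lambda>p. c (fst p) (snd p)) (t, x))"
          by (rule continuous_on_compose2[OF cc]) (auto intro!: continuous_intros)
        then show ?thesis by simp
      qed
      show "continuous_on UNIV (\<lambda>t. c t x)" if "x \<in> hilbert_cube" for x
      proof -
        have "continuous_on UNIV (\<lambda>t. (\<lambda>p. c (fst p) (snd p)) (t, x))"
          by (rule continuous_on_compose2[OF cc]) (use that in \<open>auto intro!: continuous_intros\<close>)
        then show ?thesis by simp
      qed
    qed
  qed
  show "continuous_action_hc b \<Longrightarrow> \<exists>x \<in> hilbert_cube. \<forall>t. b t x = x" by (rule flow)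
  assume H: "topological_group_add TYPE('g) \<and> solenoidal TYPE('g) \<and> continuous_action_hc a"
  then obtain f :: "real \<Rightarrow> 'g" where f: "continuous_on UNIV f" "\<And>s t. f (s + t) = f s + f t"
    "closure (range f) = UNIV"
    unfolding solenoidal_def by blast
  note A = H[THEN conjunct2, THEN conjunct2, unfolded continuous_action_hc_def]
  have ca: "continuous_on (UNIV \<times> hilbert_cube) (\<lambda>p. a (fst p) (snd p))" using A by blast
  have f0: "f 0 = 0" using f(2)[of 0 0] by (metis add.right_neutral add_left_cancel)
  have "continuous_action_hc (\<lambda>t. a (f t))"
    unfolding continuous_action_hc_def
  proof (intro conjI)
    show "\<forall>g x. x \<in> hilbert_cube \<longrightarrow> a (f g) x \<in> hilbert_cube" using A by blast
    show "\<forall>x\<in>hilbert_cube. a (f 0) x = x" using A f0 by simp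
    show "\<forall>g h. \<forall>x\<in>hilbert_cube. a (f (g + h)) x = a (f g) (a (f h) x)" using A f(2) by simp
    have "continuous_on (UNIV \<times> hilbert_cube) (\<lambda>p. (\<lambda>p. a (fst p) (snd p)) (f (fst p), snd p))"
    proof (rule continuous_on_compose2[OF ca])
      show "continuous_on (UNIV \<times> hilbert_cube) (\<lambda>p. (f (fst p), snd p))"
        by (intro continuous_on_Pair continuous_on_snd continuous_on_compose2[OF f(1) continuous_on_fst]) auto
    qed auto
    then show "continuous_on (UNIV \<times> hilbert_cube) (\<lambda>p. a (f (fst p)) (snd p))" by simp
  qed
  then obtain x where x: "x \<in> hilbert_cube" "\<And>t. a (f t) x = x" using flow by blast
  have cg: "continuous_on UNIV (\<lambda>g. a g x)"
  proof -
    have "continuous_on UNIV (\<lambda>g. (\<lambda>p. a (fst p) (snd p)) (g, x))"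
      by (rule continuous_on_compose2[OF ca]) (use x(1) in \<open>auto intro!: continuous_intros\<close>)
    then show ?thesis by simp
  qed
  have cl: "closed {g \<in> UNIV. a g x = x}"
    by (rule continuous_closed_preimage_constant[OF cg]) simp
  have "range f \<subseteq> {g \<in> UNIV. a g x = x}" using x(2) by auto
  then have "closure (range f) \<subseteq> {g \<in> UNIV. a g x = x}" using cl by (rule closure_minimal)
  then have "\<forall>g. a g x = x" using f(3) by auto
  then show "\<exists>x \<in> hilbert_cube. \<forall>g. a g x = x" using x(1) by blast
qed

end
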